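(* Let $K$ be an algebraically closed field of characteristic zero, $\deg_1$ the standard homogeneous degree on $K[x_1,\dots,x_n]$, $\Phi=(f_1,\dots,f_n)$ a polynomial automorphism of $K^n$, $d_i=\deg_1(f_i)$, $\deg_2$ the weighted degree with weights $d_i$ on $x_i$, and $I=\{Q : Q(\overline{f_1},\dots,\overline{f_n})=0\}$. If $P\in K[x_1,\dots,x_n]$ satisfies $\deg_1(P\circ\Phi)=1$, then $\tilde P\in I$ unless $P$ is affine, i.e. $\deg_1(P)\le 1$.
   Context: $\overline{f}$ denotes the homogeneous component of highest degree of $f$, and $\tilde P$ denotes the leading term of $P$ with respect to $\deg_2$. *)

theory Defs
  imports "HOL-Library.Poly_Mapping" "HOL-Computational_Algebra.Polynomial"
begin

text \<open>Multivariate polynomials over 'a: finitely supported maps from monomials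
 (exponent vectors, variable i = x_(i+1)) to coefficients.\<close>

type_synonym 'a mpoly = "(nat \<Rightarrow>\<^sub>0 nat) \<Rightarrow>\<^sub>0 'a"

definition Var :: "nat \<Rightarrow> 'a::comm_ring_1 mpoly" where
  "Var i = Poly_Mapping.single (Poly_Mapping.single i 1) 1"

definition Const :: "'a::comm_ring_1 \<Rightarrow> 'a mpoly" where
  "Const c = Poly_Mapping.single 0 c"

definition mvars :: "'a::zero mpoly \<Rightarrow> nat set" where
  "mvars P = (\<Union>m\<in>Poly_Mapping.keys P. Poly_Mapping.keys m)"

definition in_ring :: "nat \<Rightarrow> 'a::zero mpoly \<Rightarrow> bool" where
  "in_ring n P \<longleftrightarrow> mvars P \<subseteq> {..<n}"

definition wdeg_mon :: "(nat \<Rightarrow> nat) \<Rightarrow> (nat \<Rightarrow>\<^sub>0 nat) \<Rightarrow> nat" where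
  "wdeg_mon w m = (\<Sum>i\<in>Poly_Mapping.keys m. w i * Poly_Mapping.lookup m i)"

text \<open>weighted degree of a polynomial (0 for the zero polynomial)\<close>
definition wdeg :: "(nat \<Rightarrow> nat) \<Rightarrow> 'a::zero mpoly \<Rightarrow> nat" where
  "wdeg w P = Max (insert 0 (wdeg_mon w ` Poly_Mapping.keys P))"

definition deg1 :: "'a::zero mpoly \<Rightarrow> nat" where
  "deg1 P = wdeg (\<lambda>_. 1) P"

definition lead_form :: "(nat \<Rightarrow> nat) \<Rightarrow> 'a::comm_ring_1 mpoly \<Rightarrow> 'a mpoly" where
  "lead_form w P = (\<Sum>m\<in>{m\<in>Poly_Mapping.keys P. wdeg_mon w m = wdeg w P}. Poly_Mapping.single m (Poly_Mapping.lookup P m))"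

definition hcomp :: "'a::comm_ring_1 mpoly \<Rightarrow> 'a mpoly" where
  "hcomp f = lead_form (\<lambda>_. 1) f"

definition subst :: "(nat \<Rightarrow> 'a::comm_ring_1 mpoly) \<Rightarrow> 'a mpoly \<Rightarrow> 'a mpoly" where
  "subst F P = (\<Sum>m\<in>Poly_Mapping.keys P. Const (Poly_Mapping.lookup P m) * (\<Prod>i\<in>Poly_Mapping.keys m. F i ^ Poly_Mapping.lookup m i))"

definition poly_automorphism :: "nat \<Rightarrow> (nat \<Rightarrow> 'a::comm_ring_1 mpoly) \<Rightarrow> bool" where
  "poly_automorphism n F \<longleftrightarrow> (\<forall>i<n. in_ring n (F i)) \<and>
     (\<exists>G. (\<forall>i<n. in_ring n (G i)) \<and>
          (\<forall>i<n. subst G (F i) = Var i) \<and> (\<forall>i<n. subst F (G i) = Var i))"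

definition alg_closed :: "'a::field itself \<Rightarrow> bool" where
  "alg_closed _ \<longleftrightarrow> (\<forall>p::'a poly. degree p \<ge> 1 \<longrightarrow> (\<exists>x. poly p x = 0))"

end

theory Submission imports Defs begin

definition hpart :: "(nat \<Rightarrow> nat) \<Rightarrow> nat \<Rightarrow> 'a::comm_ring_1 mpoly \<Rightarrow> 'a mpoly" where
  "hpart w k Q = (\<Sum>m\<in>{m\<in>Poly_Mapping.keys Q. wdeg_mon w m = k}. Poly_Mapping.single m (Poly_Mapping.lookup Q m))"

lemma lookup_hpart: "Poly_Mapping.lookup (hpart w k Q) m = (if wdeg_mon w m = k then Poly_Mapping.lookup Q m else 0)"
proof -
  have "Poly_Mapping.lookup (hpart w k Q) m = (\<Sum>x\<in>{x\<in>Poly_Mapping.keys Q. wdeg_mon w x = k}. if x = m then Poly_Mapping.lookup Q x else 0)"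
    unfolding hpart_def by (simp add: lookup_sum lookup_single when_def)
  also have "\<dots> = (if m \<in> {x\<in>Poly_Mapping.keys Q. wdeg_mon w x = k} then Poly_Mapping.lookup Q m else 0)"
    by (simp add: sum.delta')
  finally show ?thesis by (auto simp: in_keys_iff)
qed

lemma keys_hpart: "Poly_Mapping.keys (hpart w k Q) = {m\<in>Poly_Mapping.keys Q. wdeg_mon w m = k}"
  by (auto simp: in_keys_iff lookup_hpart split: if_splits)

lemma hpart_add: "hpart w k (A + B) = hpart w k A + hpart w k B"
  by (rule poly_mapping_eqI) (simp add: lookup_hpart lookup_add)

lemma hpart_diff: "hpart w k (A - B) = hpart w k A - hpart w k B"
  by (rule poly_mapping_eqI) (simp add: lookup_hpart lookup_minus)

lemma hpart_sum: "hpart w k (sum f S) = (\<Sum>x\<in>S. hpart w k (f x))"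
  by (rule poly_mapping_eqI) (simp add: lookup_hpart lookup_sum)

lemma lookup_Const_mult: "Poly_Mapping.lookup (Const c * X) m = c * Poly_Mapping.lookup X m"
  by (simp add: Const_def mult_map_scale_conv_mult[symmetric] map.rep_eq when_def)

lemma hpart_Const_mult: "hpart w k (Const c * X) = Const c * hpart w k X"
  by (rule poly_mapping_eqI) (simp add: lookup_hpart lookup_Const_mult)

lemma hpart_self: "(\<forall>m\<in>Poly_Mapping.keys X. wdeg_mon w m = k) \<Longrightarrow> hpart w k X = X"
  by (rule poly_mapping_eqI) (auto simp: lookup_hpart in_keys_iff)

lemma hpart_zero: "(\<forall>m\<in>Poly_Mapping.keys X. wdeg_mon w m \<noteq> k) \<Longrightarrow> hpart w k X = 0"
  by (rule poly_mapping_eqI) (auto simp: lookup_hpart in_keys_iff)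

lemma wdeg_mon_superset: "finite S \<Longrightarrow> Poly_Mapping.keys m \<subseteq> S \<Longrightarrow> wdeg_mon w m = (\<Sum>i\<in>S. w i * Poly_Mapping.lookup m i)"
  unfolding wdeg_mon_def by (rule sum.mono_neutral_left) (auto simp: in_keys_iff)

lemma wdeg_mon_add: "wdeg_mon w (x + y) = wdeg_mon w x + wdeg_mon w y"
proof -
  let ?S = "Poly_Mapping.keys x \<union> Poly_Mapping.keys y"
  have f: "finite ?S" by simp
  have "wdeg_mon w (x + y) = (\<Sum>i\<in>?S. w i * Poly_Mapping.lookup (x+y) i)"
    by (rule wdeg_mon_superset[OF f]) (use keys_add[of x y] in simp)
  also have "\<dots> = (\<Sum>i\<in>?S. w i * Poly_Mapping.lookup x i + w i * Poly_Mapping.lookup y i)"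
    by (simp only: lookup_add distrib_left)
  also have "\<dots> = (\<Sum>i\<in>?S. w i * Poly_Mapping.lookup x i) + (\<Sum>i\<in>?S. w i * Poly_Mapping.lookup y i)"
    by (rule sum.distrib)
  also have "\<dots> = wdeg_mon w x + wdeg_mon w y"
    by (subst (1 2) wdeg_mon_superset[OF f]) auto
  finally show ?thesis .
qed

definition bnd :: "(nat \<Rightarrow> nat) \<Rightarrow> nat \<Rightarrow> 'a::zero mpoly \<Rightarrow> bool" where
  "bnd w e Q \<longleftrightarrow> (\<forall>m\<in>Poly_Mapping.keys Q. wdeg_mon w m \<le> e)"

lemma keys_mult_wdeg:
  fixes X Y :: "'a::comm_ring_1 mpoly"
  assumes "\<forall>m\<in>Poly_Mapping.keys X. R (wdeg_mon w m)" "\<forall>m\<in>Poly_Mapping.keys Y. S (wdeg_mon w m)"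
  shows "\<forall>m\<in>Poly_Mapping.keys (X * Y). \<exists>a b. R a \<and> S b \<and> wdeg_mon w m = a + b"
proof
  fix m assume m: "m \<in> Poly_Mapping.keys (X * Y)"
  have "\<exists>a b. m = a + b \<and> a \<in> Poly_Mapping.keys X \<and> b \<in> Poly_Mapping.keys Y"
    using keys_mult[of X Y] m by blast
  then obtain a b where ab: "m = a + b" "a \<in> Poly_Mapping.keys X" "b \<in> Poly_Mapping.keys Y"
    by blast
  show "\<exists>a b. R a \<and> S b \<and> wdeg_mon w m = a + b"
  proof (intro exI conjI)
    show "R (wdeg_mon w a)" using ab(2) assms(1) by blast
    show "S (wdeg_mon w b)" using ab(3) assms(2) by blast
    show "wdeg_mon w m = wdeg_mon w a + wdeg_mon w b" using ab(1) by (simp only: wdeg_mon_add)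
  qed
qed

lemma hpart_zero':
  assumes "\<forall>m\<in>Poly_Mapping.keys X. \<exists>a b. R a \<and> S b \<and> wdeg_mon w m = a + b"
    and "\<And>a b. R a \<Longrightarrow> S b \<Longrightarrow> a + b \<noteq> k"
  shows "hpart w k X = 0"
proof (rule hpart_zero, intro ballI)
  fix m assume "m \<in> Poly_Mapping.keys X"
  then obtain a b where "R a" "S b" "wdeg_mon w m = a + b" using assms(1) by blast
  then show "wdeg_mon w m \<noteq> k" using assms(2)[of a b] by simp
qed

lemma prod_lemma:
  fixes A B :: "'a::comm_ring_1 mpoly"
  assumes "bnd w a A" "bnd w b B"
  shows "bnd w (a+b) (A*B) \<and> hpart w (a+b) (A*B) = hpart w a A * hpart w b B"
proof
  have "\<forall>m\<in>Poly_Mapping.keys (A * B). \<exists>a' b'. a' \<le> a \<and> b' \<le> b \<and> wdeg_mon w m = a' + b'"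
    by (rule keys_mult_wdeg) (use assms in \<open>simp_all add: bnd_def\<close>)
  then show "bnd w (a+b) (A*B)" unfolding bnd_def
  proof (intro ballI)
    fix m assume h: "\<forall>m\<in>Poly_Mapping.keys (A * B). \<exists>a' b'. a' \<le> a \<and> b' \<le> b \<and> wdeg_mon w m = a' + b'"
      and m: "m \<in> Poly_Mapping.keys (A * B)"
    then obtain a' b' where "a' \<le> a" "b' \<le> b" "wdeg_mon w m = a' + b'" by blast
    then show "wdeg_mon w m \<le> a + b" by simp
  qed
next
  define hA where "hA = hpart w a A"
  define lA where "lA = A - hA"
  define hB where "hB = hpart w b B"
  define lB where "lB = B - hB"
  have khA: "\<forall>m\<in>Poly_Mapping.keys hA. wdeg_mon w m = a" by (simp add: hA_def keys_hpart)
  have khB: "\<forall>m\<in>Poly_Mapping.keys hB. wdeg_mon w m = b" by (simp add: hB_def keys_hpart)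
  have klA: "\<forall>m\<in>Poly_Mapping.keys lA. wdeg_mon w m < a"
  proof
    fix m assume m: "m \<in> Poly_Mapping.keys lA"
    then have "Poly_Mapping.lookup lA m \<noteq> 0" by (simp add: in_keys_iff)
    then have "wdeg_mon w m \<noteq> a" "m \<in> Poly_Mapping.keys A"
      by (auto simp: lA_def hA_def lookup_minus lookup_hpart in_keys_iff split: if_splits)
    moreover have "wdeg_mon w m \<le> a" using assms(1) \<open>m \<in> Poly_Mapping.keys A\<close> unfolding bnd_def by blast
    ultimately show "wdeg_mon w m < a" by simp
  qed
  have klB: "\<forall>m\<in>Poly_Mapping.keys lB. wdeg_mon w m < b"
  proof
    fix m assume m: "m \<in> Poly_Mapping.keys lB"
    then have "Poly_Mapping.lookup lB m \<noteq> 0" by (simp add: in_keys_iff)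
    then have "wdeg_mon w m \<noteq> b" "m \<in> Poly_Mapping.keys B"
      by (auto simp: lB_def hB_def lookup_minus lookup_hpart in_keys_iff split: if_splits)
    moreover have "wdeg_mon w m \<le> b" using assms(2) \<open>m \<in> Poly_Mapping.keys B\<close> unfolding bnd_def by blast
    ultimately show "wdeg_mon w m < b" by simp
  qed
  have AB: "A * B = hA * hB + (hA * lB + lA * hB + lA * lB)"
    by (simp add: lA_def lB_def algebra_simps)
  have 1: "hpart w (a+b) (hA * hB) = hA * hB"
  proof (rule hpart_self)
    show "\<forall>m\<in>Poly_Mapping.keys (hA * hB). wdeg_mon w m = a + b"
    proof
      fix m assume "m \<in> Poly_Mapping.keys (hA * hB)"
      then obtain a' b' where "a' = a" "b' = b" "wdeg_mon w m = a' + b'"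
        using keys_mult_wdeg[OF khA khB] by blast
      then show "wdeg_mon w m = a + b" by simp
    qed
  qed
  have 2: "hpart w (a+b) (hA * lB) = 0"
    by (rule hpart_zero'[OF keys_mult_wdeg[OF khA klB]]) simp
  have 3: "hpart w (a+b) (lA * hB) = 0"
    by (rule hpart_zero'[OF keys_mult_wdeg[OF klA khB]]) simp
  have 4: "hpart w (a+b) (lA * lB) = 0"
    by (rule hpart_zero'[OF keys_mult_wdeg[OF klA klB]]) simp
  show "hpart w (a+b) (A*B) = hpart w a A * hpart w b B"
    unfolding AB hpart_add 1 2 3 4 by (simp add: hA_def hB_def)
qed


lemma wdeg_mon_zero [simp]: "wdeg_mon w 0 = 0"
  by (simp add: wdeg_mon_def)

lemma one_lemma: "bnd w 0 (1::'a::comm_ring_1 mpoly) \<and> hpart w 0 (1::'a mpoly) = 1"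
proof
  show "bnd w 0 (1::'a mpoly)" by (simp add: bnd_def)
  show "hpart w 0 (1::'a mpoly) = 1" by (rule hpart_self) simp
qed

lemma pow_lemma:
  fixes A :: "'a::comm_ring_1 mpoly"
  assumes "bnd w a A"
  shows "bnd w (k*a) (A^k) \<and> hpart w (k*a) (A^k) = (hpart w a A)^k"
proof (induction k)
  case 0
  then show ?case using one_lemma by simp
next
  case (Suc k)
  have "bnd w (a + k*a) (A * A^k) \<and> hpart w (a + k*a) (A * A^k) = hpart w a A * hpart w (k*a) (A^k)"
    using prod_lemma[OF assms Suc[THEN conjunct1]] .
  then show ?case using Suc[THEN conjunct2] by simp
qed

lemma prodset_lemma:
  fixes F :: "nat \<Rightarrow> 'a::comm_ring_1 mpoly"
  assumes "finite S" "\<forall>i\<in>S. bnd w (a i) (F i)"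
  shows "bnd w (\<Sum>i\<in>S. a i) (\<Prod>i\<in>S. F i) \<and> hpart w (\<Sum>i\<in>S. a i) (\<Prod>i\<in>S. F i) = (\<Prod>i\<in>S. hpart w (a i) (F i))"
  using assms
proof (induction S rule: finite_induct)
  case empty
  then show ?case using one_lemma by simp
next
  case (insert x S)
  have "bnd w (a x + (\<Sum>i\<in>S. a i)) (F x * (\<Prod>i\<in>S. F i)) \<and>
    hpart w (a x + (\<Sum>i\<in>S. a i)) (F x * (\<Prod>i\<in>S. F i)) = hpart w (a x) (F x) * hpart w (\<Sum>i\<in>S. a i) (\<Prod>i\<in>S. F i)"
  proof -
    have IH: "bnd w (\<Sum>i\<in>S. a i) (\<Prod>i\<in>S. F i) \<and> hpart w (\<Sum>i\<in>S. a i) (\<Prod>i\<in>S. F i) = (\<Prod>i\<in>S. hpart w (a i) (F i))"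
      using insert by simp
    have bx: "bnd w (a x) (F x)" using insert by simp
    show ?thesis using prod_lemma[OF bx IH[THEN conjunct1]] IH by simp
  qed
  then show ?case using insert by simp
qed

definition mon :: "(nat \<Rightarrow> 'a::comm_ring_1 mpoly) \<Rightarrow> (nat \<Rightarrow>\<^sub>0 nat) \<Rightarrow> 'a mpoly" where
  "mon F m = (\<Prod>i\<in>Poly_Mapping.keys m. F i ^ Poly_Mapping.lookup m i)"

lemma mon_lemma:
  assumes "\<forall>i. bnd w (d i) (F i)"
  shows "bnd w (wdeg_mon d m) (mon F m) \<and> hpart w (wdeg_mon d m) (mon F m) = mon (\<lambda>i. hpart w (d i) (F i)) m"
proof -
  have "\<forall>i\<in>Poly_Mapping.keys m. bnd w (Poly_Mapping.lookup m i * d i) (F i ^ Poly_Mapping.lookup m i)"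
    using pow_lemma assms by blast
  from prodset_lemma[OF finite_keys this]
  have "bnd w (\<Sum>i\<in>Poly_Mapping.keys m. Poly_Mapping.lookup m i * d i) (mon F m) \<and>
        hpart w (\<Sum>i\<in>Poly_Mapping.keys m. Poly_Mapping.lookup m i * d i) (mon F m) =
        (\<Prod>i\<in>Poly_Mapping.keys m. hpart w (Poly_Mapping.lookup m i * d i) (F i ^ Poly_Mapping.lookup m i))"
    unfolding mon_def .
  moreover have "(\<Prod>i\<in>Poly_Mapping.keys m. hpart w (Poly_Mapping.lookup m i * d i) (F i ^ Poly_Mapping.lookup m i))
      = mon (\<lambda>i. hpart w (d i) (F i)) m"
    unfolding mon_def by (intro prod.cong refl) (simp add: pow_lemma[OF assms[rule_format], THEN conjunct2])
  moreover have "(\<Sum>i\<in>Poly_Mapping.keys m. Poly_Mapping.lookup m i * d i) = wdeg_mon d m"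
    unfolding wdeg_mon_def by (simp add: mult.commute)
  ultimately show ?thesis by simp
qed

lemma bnd_mono: "bnd w a X \<Longrightarrow> a \<le> b \<Longrightarrow> bnd w b X"
  unfolding bnd_def by force

lemma bnd_Const_mult: "bnd w a X \<Longrightarrow> bnd w a (Const c * X)"
  unfolding bnd_def by (auto simp: in_keys_iff lookup_Const_mult)

lemma bnd_sum: "\<forall>x\<in>S. bnd w a (f x) \<Longrightarrow> bnd w a (sum f S)"
  unfolding bnd_def using keys_sum[of f S] by blast

lemma subst_mon: "subst F P = (\<Sum>m\<in>Poly_Mapping.keys P. Const (Poly_Mapping.lookup P m) * mon F m)"
  unfolding subst_def mon_def ..

lemma subst_lemma:
  assumes "\<forall>i. bnd w (d i) (F i)" "bnd d e Q"
  shows "bnd w e (subst F Q) \<and> hpart w e (subst F Q) = subst (\<lambda>i. hpart w (d i) (F i)) (hpart d e Q)"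
proof
  have each: "\<forall>m\<in>Poly_Mapping.keys Q. bnd w e (mon F m)"
    using mon_lemma[OF assms(1)] assms(2) bnd_mono unfolding bnd_def by blast
  show "bnd w e (subst F Q)"
    unfolding subst_mon using each by (intro bnd_sum ballI bnd_Const_mult) auto
next
  let ?hF = "\<lambda>i. hpart w (d i) (F i)"
  have "hpart w e (subst F Q) = (\<Sum>m\<in>Poly_Mapping.keys Q. Const (Poly_Mapping.lookup Q m) * hpart w e (mon F m))"
    unfolding subst_mon hpart_sum hpart_Const_mult ..
  also have "\<dots> = (\<Sum>m\<in>Poly_Mapping.keys Q. if wdeg_mon d m = e then Const (Poly_Mapping.lookup Q m) * mon ?hF m else 0)"
  proof (rule sum.cong)
    fix m assume m: "m \<in> Poly_Mapping.keys Q"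
    show "Const (Poly_Mapping.lookup Q m) * hpart w e (mon F m) =
      (if wdeg_mon d m = e then Const (Poly_Mapping.lookup Q m) * mon ?hF m else 0)"
    proof (cases "wdeg_mon d m = e")
      case True
      then show ?thesis using mon_lemma[OF assms(1), of m] by simp
    next
      case False
      then have lt: "wdeg_mon d m < e" using assms(2) m unfolding bnd_def by force
      have "hpart w e (mon F m) = 0"
        using mon_lemma[OF assms(1), of m] lt unfolding bnd_def by (intro hpart_zero) force
      then show ?thesis using False by simp
    qed
  qed simp
  also have "\<dots> = (\<Sum>m\<in>{m\<in>Poly_Mapping.keys Q. wdeg_mon d m = e}. Const (Poly_Mapping.lookup Q m) * mon ?hF m)"
    by (simp add: sum.inter_filter)
  also have "\<dots> = subst ?hF (hpart d e Q)"
    unfolding subst_mon keys_hpart by (intro sum.cong) (auto simp: lookup_hpart)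
  finally show "hpart w e (subst F Q) = subst ?hF (hpart d e Q)" .
qed


lemma wdeg_mon_le: "m \<in> Poly_Mapping.keys P \<Longrightarrow> wdeg_mon w m \<le> wdeg w P"
  unfolding wdeg_def by (rule Max_ge) auto

lemma bnd_wdeg: "bnd w (wdeg w P) P"
  unfolding bnd_def using wdeg_mon_le by blast

lemma lead_form_hpart: "lead_form w P = hpart w (wdeg w P) P"
  unfolding lead_form_def hpart_def ..

lemma hcomp_hpart: "hcomp f = hpart (\<lambda>_. 1) (deg1 f) f"
  unfolding hcomp_def deg1_def lead_form_hpart ..

lemma deg0_const:
  fixes f :: "'a::comm_ring_1 mpoly"
  assumes "deg1 f = 0" shows "f = Const (Poly_Mapping.lookup f 0)"
proof (rule poly_mapping_eqI)
  fix m
  show "Poly_Mapping.lookup f m = Poly_Mapping.lookup (Const (Poly_Mapping.lookup f 0)) m"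
  proof (cases "m \<in> Poly_Mapping.keys f")
    case True
    then have "wdeg_mon (\<lambda>_. 1) m \<le> 0" using wdeg_mon_le[OF True, of "\<lambda>_. 1"] assms
      unfolding deg1_def by simp
    then have "\<forall>i\<in>Poly_Mapping.keys m. Poly_Mapping.lookup m i = 0"
      unfolding wdeg_mon_def by simp
    then have "m = 0" by (metis in_keys_iff lookup_zero poly_mapping_eqI)
    then show ?thesis by (simp add: Const_def)
  next
    case False
    then have "m \<noteq> 0 \<Longrightarrow> ?thesis" by (simp add: Const_def lookup_single when_def in_keys_iff)
    then show ?thesis by (cases "m = 0") (auto simp: Const_def)
  qed
qed

lemma subst_Const: "subst G (Const c) = Const c"
  by (cases "c = 0") (simp_all add: subst_def Const_def)

lemma Const_ne_Var: "Const c \<noteq> (Var i :: 'a::comm_ring_1 mpoly)"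
proof
  assume h: "Const c = (Var i :: 'a mpoly)"
  have ne: "Poly_Mapping.single i (1::nat) \<noteq> 0"
  proof
    assume "Poly_Mapping.single i (1::nat) = 0"
    then have "Poly_Mapping.lookup (Poly_Mapping.single i (1::nat)) i = Poly_Mapping.lookup 0 i" by simp
    then show False by simp
  qed
  have "Poly_Mapping.lookup (Const c :: 'a mpoly) (Poly_Mapping.single i 1) = Poly_Mapping.lookup (Var i :: 'a mpoly) (Poly_Mapping.single i 1)"
    using h by simp
  then show False using ne by (simp add: Const_def Var_def lookup_single when_def)
qed

lemma deg_pos:
  assumes "poly_automorphism n \<Phi>" "i < n"
  shows "deg1 (\<Phi> i) \<ge> 1"
proof (rule ccontr)
  assume "\<not> deg1 (\<Phi> i) \<ge> 1"
  then have "\<Phi> i = Const (Poly_Mapping.lookup (\<Phi> i) 0)" using deg0_const[of "\<Phi> i"] by simp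
  moreover obtain G where "subst G (\<Phi> i) = Var i"
    using assms unfolding poly_automorphism_def by blast
  ultimately show False using subst_Const Const_ne_Var by metis
qed

theorem corollary3:
  fixes n :: nat and \<Phi> :: "nat \<Rightarrow> 'a::field_char_0 mpoly" and P :: "'a mpoly"
  assumes "alg_closed TYPE('a)"
    and "poly_automorphism n \<Phi>"
    and "in_ring n P"
    and "deg1 (subst \<Phi> P) = 1"
  shows "deg1 P \<le> 1 \<or>
         (let d = (\<lambda>i. deg1 (\<Phi> i)) in subst (\<lambda>i. hcomp (\<Phi> i)) (lead_form d P) = 0)"
proof -
  define d where "d = (\<lambda>i. deg1 (\<Phi> i))"
  define D where "D = wdeg d P"
  have bF: "\<forall>i. bnd (\<lambda>_. 1) (d i) (\<Phi> i)"
    unfolding d_def deg1_def using bnd_wdeg by blast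
  have key: "hpart (\<lambda>_. 1) D (subst \<Phi> P) = subst (\<lambda>i. hcomp (\<Phi> i)) (lead_form d P)"
    using subst_lemma[OF bF bnd_wdeg[of d P]] unfolding D_def lead_form_hpart hcomp_hpart d_def
    by simp
  show ?thesis
  proof (cases "D \<ge> 2")
    case True
    have "hpart (\<lambda>_. 1) D (subst \<Phi> P) = 0"
    proof (rule hpart_zero, intro ballI)
      fix m assume "m \<in> Poly_Mapping.keys (subst \<Phi> P)"
      then have "wdeg_mon (\<lambda>_. 1) m \<le> 1" using wdeg_mon_le[of m "subst \<Phi> P" "\<lambda>_. 1"] assms(4)
        unfolding deg1_def by simp
      then show "wdeg_mon (\<lambda>_. 1) m \<noteq> D" using True by simp
    qed
    then show ?thesis using key by (simp add: d_def)
  next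
    case False
    have "\<forall>m\<in>Poly_Mapping.keys P. wdeg_mon (\<lambda>_. 1) m \<le> 1"
    proof
      fix m assume m: "m \<in> Poly_Mapping.keys P"
      have ks: "Poly_Mapping.keys m \<subseteq> {..<n}"
        using assms(3) m unfolding in_ring_def mvars_def by blast
      have "wdeg_mon (\<lambda>_. 1) m = (\<Sum>i\<in>Poly_Mapping.keys m. 1 * Poly_Mapping.lookup m i)"
        unfolding wdeg_mon_def ..
      also have "\<dots> \<le> (\<Sum>i\<in>Poly_Mapping.keys m. d i * Poly_Mapping.lookup m i)"
      proof (rule sum_mono)
        fix i assume "i \<in> Poly_Mapping.keys m"
        then have "d i \<ge> 1" using ks deg_pos[OF assms(2)] unfolding d_def by blast
        then show "1 * Poly_Mapping.lookup m i \<le> d i * Poly_Mapping.lookup m i" by simp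
      qed
      also have "\<dots> = wdeg_mon d m" unfolding wdeg_mon_def ..
      also have "\<dots> \<le> D" unfolding D_def using wdeg_mon_le[OF m] .
      finally show "wdeg_mon (\<lambda>_. 1) m \<le> 1" using False by simp
    qed
    then have "deg1 P \<le> 1"
      unfolding deg1_def wdeg_def by (subst Max_le_iff) auto
    then show ?thesis by simp
  qed
qed

end
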